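(* Let $(G,o)$ be a strong orientation of a cubic graph $G$. Let $e_1=u_1v_1$, $e_2=u_2v_2$ and $f=w_2w_1$ be pairwise non-adjacent edges of $G$ oriented $u_1\to v_1$, $u_2\to v_2$ and $w_2\to w_1$ in $(G,o)$, all three deletable in $(G,o)$. Let $G'$ be obtained from $G$ by subdividing $e_1$ with a new vertex $x_1$, subdividing $e_2$ with a new vertex $x_2$, subdividing $w_1w_2$ with new vertices $y_1,y_2$ so that it becomes the path $w_1y_1y_2w_2$, and adding the edges $x_1y_1$ and $x_2y_2$. Let $(G',o')$ be an orientation of $G'$ containing $u_1\to x_1$, $x_1\to v_1$, $y_1\to w_1$, $y_2\to y_1$, $w_2\to y_2$, $u_2\to x_2$, $x_2\to v_2$, with $o'(e)=o(e)$ for all other edges of $G'$ except $x_1y_1$ and $x_2y_2$. Then: (a) if $(G',o')$ contains $y_1\to x_1$ and $x_2\to y_2$, then $(G',o')$ is strong and $D(G',o')\supseteq (D(G,o)\setminus\{e_1,e_2,f\})\cup\{u_1x_1,x_1y_1,y_1w_1,y_2w_2,x_2y_2,x_2v_2\}$; (b) if $(G',o')$ contains $x_1\to y_1$ and $y_2\to x_2$, then $(G',o')$ is strong and $D(G',o')\supseteq (D(G,o)\setminus\{e_1,e_2,f\})\cup\{x_1v_1,y_1y_2,u_2x_2\}$.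
   Context: An orientation is strong if for every ordered pair of distinct vertices $u,v$ there is a directed $uv$-path. An edge $e$ is deletable in an orientation $(G,o)$ if the restriction of $o$ to $E(G)\setminus\{e\}$ is a strong orientation of $G-e$. $D(G,o)$ denotes the set of edges deletable in $(G,o)$. *)

theory Defs
  imports Main
begin

definition simple_graph :: "'a set \<Rightarrow> 'a set set \<Rightarrow> bool" where
  "simple_graph V E \<longleftrightarrow> finite V \<and>
     (\<forall>e\<in>E. \<exists>u v. e = {u, v} \<and> u \<noteq> v \<and> u \<in> V \<and> v \<in> V)"

definition degree :: "'a set set \<Rightarrow> 'a \<Rightarrow> nat" where
  "degree E v = card {e\<in>E. v \<in> e}"

definition cubic :: "'a set \<Rightarrow> 'a set set \<Rightarrow> bool" where
  "cubic V E \<longleftrightarrow> simple_graph V E \<and> (\<forall>v\<in>V. degree E v = 3)"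

definition orientation :: "'a set \<Rightarrow> 'a set set \<Rightarrow> ('a \<times> 'a) set \<Rightarrow> bool" where
  "orientation V E A \<longleftrightarrow> A \<subseteq> V \<times> V \<and> (\<forall>(u,v)\<in>A. {u, v} \<in> E) \<and>
     (\<forall>u v. {u, v} \<in> E \<longrightarrow> ((u, v) \<in> A \<longleftrightarrow> (v, u) \<notin> A))"

definition strong :: "'a set \<Rightarrow> ('a \<times> 'a) set \<Rightarrow> bool" where
  "strong V A \<longleftrightarrow> (\<forall>u\<in>V. \<forall>v\<in>V. u \<noteq> v \<longrightarrow> (u, v) \<in> A\<^sup>+)"

definition strong_orientation :: "'a set \<Rightarrow> 'a set set \<Rightarrow> ('a \<times> 'a) set \<Rightarrow> bool" where
  "strong_orientation V E A \<longleftrightarrow> orientation V E A \<and> strong V A"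

definition restrict_arcs :: "('a \<times> 'a) set \<Rightarrow> 'a set \<Rightarrow> ('a \<times> 'a) set" where
  "restrict_arcs A e = {(u, v) \<in> A. {u, v} \<noteq> e}"

definition deletable :: "'a set \<Rightarrow> 'a set set \<Rightarrow> ('a \<times> 'a) set \<Rightarrow> 'a set \<Rightarrow> bool" where
  "deletable V E A e \<longleftrightarrow> e \<in> E \<and> strong_orientation V (E - {e}) (restrict_arcs A e)"

definition D :: "'a set \<Rightarrow> 'a set set \<Rightarrow> ('a \<times> 'a) set \<Rightarrow> 'a set set" where
  "D V E A = {e\<in>E. deletable V E A e}"

end

theory Submission imports Defs begin
lemma orient_restrict:
  assumes "orientation V E A" shows "orientation V (E - {g}) (restrict_arcs A g)"
proof -
  have a: "A \<subseteq> V \<times> V" "\<forall>(u,v)\<in>A. {u, v} \<in> E" "\<forall>u v. {u, v} \<in> E \<longrightarrow> ((u, v) \<in> A \<longleftrightarrow> (v, u) \<notin> A)"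
    using assms unfolding orientation_def by auto
  have 1: "restrict_arcs A g \<subseteq> V \<times> V" using a(1) unfolding restrict_arcs_def by blast
  have 2: "\<forall>(u,v)\<in>restrict_arcs A g. {u, v} \<in> E - {g}" using a(2) unfolding restrict_arcs_def by blast
  have 3: "\<forall>u v. {u, v} \<in> E - {g} \<longrightarrow> ((u, v) \<in> restrict_arcs A g \<longleftrightarrow> (v, u) \<notin> restrict_arcs A g)"
  proof (intro allI impI)
    fix u v assume uv: "{u, v} \<in> E - {g}"
    have "{v,u} = {u,v}" by (rule insert_commute)
    thus "(u, v) \<in> restrict_arcs A g \<longleftrightarrow> (v, u) \<notin> restrict_arcs A g"
    proof -
      have e: "{u,v}\<in>E" "{u,v}\<noteq>g" using uv by auto
      have "(u, v) \<in> A \<longleftrightarrow> (v, u) \<notin> A" using a(3) e(1) by blast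
      thus ?thesis using e(2) \<open>{v,u} = {u,v}\<close> unfolding restrict_arcs_def by simp
    qed
  qed
  show ?thesis using 1 2 3 unfolding orientation_def by blast
qed

lemma del_intro:
  assumes "orientation V E A" "g \<in> E" "strong V (restrict_arcs A g)"
  shows "g \<in> D V E A"
  using assms orient_restrict[OF assms(1)]
  by (simp add: D_def deletable_def strong_orientation_def)

lemma strong_lift:
  assumes st: "strong V B" and BC: "\<And>a b. (a,b)\<in>B \<Longrightarrow> (a,b)\<in>C\<^sup>*"
  and V': "V' = V \<union> {x1,x2,y1,y2}"
  and "pa\<in>V" "(x1,pa)\<in>C\<^sup>*" "pb\<in>V" "(x2,pb)\<in>C\<^sup>*"
      "pc\<in>V" "(y1,pc)\<in>C\<^sup>*" "pd\<in>V" "(y2,pd)\<in>C\<^sup>*"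
  and "qa\<in>V" "(qa,x1)\<in>C\<^sup>*" "qb\<in>V" "(qb,x2)\<in>C\<^sup>*"
      "qc\<in>V" "(qc,y1)\<in>C\<^sup>*" "qd\<in>V" "(qd,y2)\<in>C\<^sup>*"
  shows "strong V' C"
proof -
  have BT: "(a,b)\<in>C\<^sup>*" if "(a,b)\<in>B\<^sup>+" for a b
    using that
  proof (induction rule: trancl_induct)
    case (base y) thus ?case by (rule BC)
  next
    case (step y z) from step.IH BC[OF step.hyps(2)] show ?case by (rule rtrancl_trans)
  qed
  have out: "\<exists>a\<in>V. (u,a)\<in>C\<^sup>*" if "u\<in>V'" for u
  proof -
    have "u \<in> V \<or> u=x1 \<or> u=x2 \<or> u=y1 \<or> u=y2" using that V' by blast
    thus ?thesis using assms(4-11) by (elim disjE) (blast intro: rtrancl.rtrancl_refl)+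
  qed
  have inn: "\<exists>a\<in>V. (a,u)\<in>C\<^sup>*" if "u\<in>V'" for u
  proof -
    have "u \<in> V \<or> u=x1 \<or> u=x2 \<or> u=y1 \<or> u=y2" using that V' by blast
    thus ?thesis using assms(12-19) by (elim disjE) (blast intro: rtrancl.rtrancl_refl)+
  qed
  show ?thesis unfolding strong_def
  proof (intro ballI impI)
    fix u v assume u: "u\<in>V'" and v: "v\<in>V'" and uv: "u\<noteq>v"
    obtain a where a: "a\<in>V" "(u,a)\<in>C\<^sup>*" using out[OF u] by blast
    obtain b where b: "b\<in>V" "(b,v)\<in>C\<^sup>*" using inn[OF v] by blast
    have "(a,b)\<in>C\<^sup>*"
    proof (cases "a=b")
      case False thus ?thesis using st a b BT unfolding strong_def by blast
    qed simp
    hence "(u,v)\<in>C\<^sup>*" using a b by (meson rtrancl_trans)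
    thus "(u,v)\<in>C\<^sup>+" using uv by (meson rtranclD)
  qed
qed

lemma arcs_lift:
  assumes ab0: "(a,b)\<in>B" and "orientation V E A" "(u1,v1)\<in>A" "(u2,v2)\<in>A" "(w2,w1)\<in>A" "B \<subseteq> A"
  and "(u1,v1)\<in>B \<Longrightarrow> (u1,v1)\<in>C\<^sup>*"
  and "(u2,v2)\<in>B \<Longrightarrow> (u2,v2)\<in>C\<^sup>*"
  and "(w2,w1)\<in>B \<Longrightarrow> (w2,w1)\<in>C\<^sup>*"
  and "\<And>a b. (a,b)\<in>B \<Longrightarrow> {a,b}\<in>E - {{u1,v1},{u2,v2},{w2,w1}} \<Longrightarrow> (a,b)\<in>C\<^sup>*"
  shows "(a,b)\<in>C\<^sup>*"
proof -
  note assms = assms(2-) ab0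
  have ab: "(a,b)\<in>A" using assms by auto
  hence E: "{a,b}\<in>E" using assms(1) unfolding orientation_def by auto
  have o: "\<And>p q. {p,q}\<in>E \<Longrightarrow> (p,q)\<in>A \<Longrightarrow> (q,p)\<notin>A" using assms(1) unfolding orientation_def by blast
  consider "(a,b) = (u1,v1)" | "(a,b) = (u2,v2)" | "(a,b) = (w2,w1)" | "{a,b}\<in>E - {{u1,v1},{u2,v2},{w2,w1}}"
  proof -
    have "{a,b} = {u1,v1} \<Longrightarrow> (a,b) = (u1,v1)" using o[OF E ab] assms(2) by (auto simp: doubleton_eq_iff)
    moreover have "{a,b} = {u2,v2} \<Longrightarrow> (a,b) = (u2,v2)" using o[OF E ab] assms(3) by (auto simp: doubleton_eq_iff)
    moreover have "{a,b} = {w2,w1} \<Longrightarrow> (a,b) = (w2,w1)" using o[OF E ab] assms(4) by (auto simp: doubleton_eq_iff)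
    ultimately show ?thesis using that E by blast
  qed
  thus ?thesis
  proof cases
    case 1 thus ?thesis using assms(6,10) by simp
  next
    case 2 thus ?thesis using assms(7,10) by simp
  next
    case 3 thus ?thesis using assms(8,10) by simp
  next
    case 4 thus ?thesis using assms(9)[OF assms(10)] by simp
  qed
qed

lemma old_arc:
  assumes "(a,b)\<in>A" "A \<subseteq> V\<times>V"
    "\<And>a b. {a, b} \<in> E - S \<Longrightarrow> ((a, b) \<in> A' \<longleftrightarrow> (a, b) \<in> A)"
    "{a,b}\<in>E - S" "{a,b}\<noteq>g"
  shows "(a,b) \<in> (restrict_arcs A' g)\<^sup>*"
proof -
  have "(a,b)\<in>A'" using assms(3)[OF assms(4)] assms(1) by blast
  hence "(a,b) \<in> restrict_arcs A' g" using assms(5) by (simp add: restrict_arcs_def)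
  thus ?thesis by (rule r_into_rtrancl)
qed

lemma neq_new: "a\<in>V \<Longrightarrow> b\<in>V \<Longrightarrow> z\<notin>V \<Longrightarrow> z\<in>g \<Longrightarrow> {a,b}\<noteq>g" by auto


theorem mainTheorem10:
  fixes V :: "'a set" and E :: "'a set set" and A :: "('a \<times> 'a) set"
    and u1 v1 u2 v2 w1 w2 x1 x2 y1 y2 :: 'a
    and V' :: "'a set" and E' :: "'a set set" and A' :: "('a \<times> 'a) set"
  assumes cub: "cubic V E"
    and so: "strong_orientation V E A"
    and e1: "{u1, v1} \<in> E" and e2: "{u2, v2} \<in> E" and f: "{w2, w1} \<in> E"
    and nonadj: "{u1, v1} \<inter> {u2, v2} = {}" "{u1, v1} \<inter> {w2, w1} = {}"
                "{u2, v2} \<inter> {w2, w1} = {}"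
    and arcs: "(u1, v1) \<in> A" "(u2, v2) \<in> A" "(w2, w1) \<in> A"
    and del: "{u1, v1} \<in> D V E A" "{u2, v2} \<in> D V E A" "{w2, w1} \<in> D V E A"
    and new: "x1 \<notin> V" "x2 \<notin> V" "y1 \<notin> V" "y2 \<notin> V"
    and newdist: "distinct [x1, x2, y1, y2]"
    and V'_def: "V' = V \<union> {x1, x2, y1, y2}"
    and E'_def: "E' = (E - {{u1, v1}, {u2, v2}, {w2, w1}}) \<union>
        {{u1, x1}, {x1, v1}, {u2, x2}, {x2, v2}, {w1, y1}, {y1, y2}, {y2, w2},
         {x1, y1}, {x2, y2}}"
    and or': "orientation V' E' A'"
    and arcs': "(u1, x1) \<in> A'" "(x1, v1) \<in> A'" "(y1, w1) \<in> A'" "(y2, y1) \<in> A'"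
               "(w2, y2) \<in> A'" "(u2, x2) \<in> A'" "(x2, v2) \<in> A'"
    and agree: "\<And>a b. {a, b} \<in> E - {{u1, v1}, {u2, v2}, {w2, w1}} \<Longrightarrow>
                  ((a, b) \<in> A' \<longleftrightarrow> (a, b) \<in> A)"
  shows "((y1, x1) \<in> A' \<and> (x2, y2) \<in> A' \<longrightarrow>
            strong V' A' \<and>
            (D V E A - {{u1, v1}, {u2, v2}, {w2, w1}}) \<union>
              {{u1, x1}, {x1, y1}, {y1, w1}, {y2, w2}, {x2, y2}, {x2, v2}} \<subseteq> D V' E' A')
       \<and> ((x1, y1) \<in> A' \<and> (y2, x2) \<in> A' \<longrightarrow>
            strong V' A' \<and>
            (D V E A - {{u1, v1}, {u2, v2}, {w2, w1}}) \<union>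
              {{x1, v1}, {y1, y2}, {u2, x2}} \<subseteq> D V' E' A')"
proof -
  have sg: "simple_graph V E" using cub by (simp add: cubic_def)
  have orA: "orientation V E A" using so by (simp add: strong_orientation_def)
  have stA: "strong V A" using so by (simp add: strong_orientation_def)
  have AV: "A \<subseteq> V \<times> V" using orA by (simp add: orientation_def)
  have edgeV: "\<And>p q. {p,q}\<in>E \<Longrightarrow> p\<in>V \<and> q\<in>V \<and> p\<noteq>q"
  proof -
    fix p q assume "{p,q}\<in>E"
    then obtain a b where "{p,q} = {a,b}" "a\<noteq>b" "a\<in>V" "b\<in>V" using sg unfolding simple_graph_def by blast
    thus "p\<in>V \<and> q\<in>V \<and> p\<noteq>q" by (auto simp: doubleton_eq_iff)
  qed
  have Vm: "u1\<in>V" "v1\<in>V" "u2\<in>V" "v2\<in>V" "w1\<in>V" "w2\<in>V" "u1\<noteq>v1" "u2\<noteq>v2" "w2\<noteq>w1"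
    using edgeV[OF e1] edgeV[OF e2] edgeV[OF f] by auto
  have d0: "u1\<noteq>u2" "u1\<noteq>v2" "v1\<noteq>u2" "v1\<noteq>v2" "u1\<noteq>w1" "u1\<noteq>w2" "v1\<noteq>w1" "v1\<noteq>w2"
     "u2\<noteq>w1" "u2\<noteq>w2" "v2\<noteq>w1" "v2\<noteq>w2"
    using nonadj by auto
  have d1: "x1\<noteq>u1" "x1\<noteq>v1" "x1\<noteq>u2" "x1\<noteq>v2" "x1\<noteq>w1" "x1\<noteq>w2"
     "x2\<noteq>u1" "x2\<noteq>v1" "x2\<noteq>u2" "x2\<noteq>v2" "x2\<noteq>w1" "x2\<noteq>w2"
     "y1\<noteq>u1" "y1\<noteq>v1" "y1\<noteq>u2" "y1\<noteq>v2" "y1\<noteq>w1" "y1\<noteq>w2"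
     "y2\<noteq>u1" "y2\<noteq>v1" "y2\<noteq>u2" "y2\<noteq>v2" "y2\<noteq>w1" "y2\<noteq>w2"
    using new Vm by auto
  have d2: "x1\<noteq>x2" "x1\<noteq>y1" "x1\<noteq>y2" "x2\<noteq>y1" "x2\<noteq>y2" "y1\<noteq>y2" using newdist by auto
  note dist = Vm(7-9) d0 d1 d2 Vm(7-9)[THEN not_sym] d0[THEN not_sym] d1[THEN not_sym] d2[THEN not_sym]
  have rsub: "\<And>h. restrict_arcs A h \<subseteq> A" by (auto simp: restrict_arcs_def)
  have oldnew: "\<And>a b z g. (a,b)\<in>A \<Longrightarrow> {a,b}\<in>E - {{u1, v1}, {u2, v2}, {w2, w1}} \<Longrightarrow> z\<notin>V \<Longrightarrow> z\<in>g
      \<Longrightarrow> (a,b)\<in>(restrict_arcs A' g)\<^sup>*"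
  proof -
    fix a b z g assume ab: "(a,b)\<in>A" and E: "{a,b}\<in>E - {{u1, v1}, {u2, v2}, {w2, w1}}" and z: "z\<notin>V" "z\<in>g"
    have "a\<in>V" "b\<in>V" using ab AV by auto
    hence "{a,b}\<noteq>g" using z by auto
    thus "(a,b)\<in>(restrict_arcs A' g)\<^sup>*" using old_arc[OF ab AV agree E] by blast
  qed
  have oldold: "\<And>a b g. (a,b)\<in>restrict_arcs A g \<Longrightarrow> {a,b}\<in>E - {{u1, v1}, {u2, v2}, {w2, w1}}
      \<Longrightarrow> (a,b)\<in>(restrict_arcs A' g)\<^sup>*"
  proof -
    fix a b g assume ab: "(a,b)\<in>restrict_arcs A g" and E: "{a,b}\<in>E - {{u1, v1}, {u2, v2}, {w2, w1}}"
    have "(a,b)\<in>A" "{a,b}\<noteq>g" using ab by (auto simp: restrict_arcs_def)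
    thus "(a,b)\<in>(restrict_arcs A' g)\<^sup>*" using old_arc[OF _ AV agree E] by blast
  qed
  have oldA: "\<And>a b. (a,b)\<in>A \<Longrightarrow> {a,b}\<in>E - {{u1, v1}, {u2, v2}, {w2, w1}} \<Longrightarrow> (a,b)\<in>A'\<^sup>*"
    using agree by blast
  have stR: "\<And>h. h \<in> D V E A \<Longrightarrow> strong V (restrict_arcs A h)"
    by (simp add: D_def deletable_def strong_orientation_def)
  have nR: "\<And>p q h. {p,q} = h \<Longrightarrow> (p,q) \<notin> restrict_arcs A h" by (simp add: restrict_arcs_def)
  note rr = converse_rtrancl_into_rtrancl rtrancl.rtrancl_refl
  have partA: "(y1, x1) \<in> A' \<and> (x2, y2) \<in> A' \<longrightarrow>
            strong V' A' \<and>
            (D V E A - {{u1, v1}, {u2, v2}, {w2, w1}}) \<union>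
              {{u1, x1}, {x1, y1}, {y1, w1}, {y2, w2}, {x2, y2}, {x2, v2}} \<subseteq> D V' E' A'"
  proof (intro impI conjI)
    assume ya: "(y1, x1) \<in> A' \<and> (x2, y2) \<in> A'"
    note c0 = arcs' ya[THEN conjunct1] ya[THEN conjunct2]
    show "strong V' A'"
      apply (rule strong_lift[where B=A and pa=v1 and pb=v2 and pc=w1 and pd=w1 and qa=u1 and qb=u2 and qc=w2 and qd=w2, OF stA _ V'_def])
      apply (rule arcs_lift[OF _ orA arcs order.refl], assumption)
      by (meson c0 rr oldA Vm)+
    have n0: "{u1,x1} \<in> D V' E' A'"
    proof (rule del_intro[OF or'])
      show "{u1,x1} \<in> E'" unfolding E'_def by (simp add: doubleton_eq_iff)
      let ?C = "restrict_arcs A' {u1,x1}"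
      have c: "(x1,v1)\<in>?C" "(y1,w1)\<in>?C" "(y2,y1)\<in>?C" "(w2,y2)\<in>?C" "(u2,x2)\<in>?C" "(x2,v2)\<in>?C" "(y1,x1)\<in>?C" "(x2,y2)\<in>?C"
        using c0 by (simp_all add: restrict_arcs_def doubleton_eq_iff dist)
      show "strong V' ?C"
        apply (rule strong_lift[where B="restrict_arcs A {u1,v1}" and pa=v1 and pb=v2 and pc=w1 and pd=w1 and qa=w2 and qb=u2 and qc=w2 and qd=w2, OF stR[OF del(1)] _ V'_def])
        apply (rule arcs_lift[OF _ orA arcs rsub], assumption)
        apply (simp add: nR)
        apply (meson c rr)
        apply (meson c rr)
        apply (rule oldnew[where z=x1])
           apply (use rsub in blast)
          apply assumption
         apply (rule new)
        apply simp
        by (meson c rr Vm)+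
    qed
    have n1: "{x1,y1} \<in> D V' E' A'"
    proof (rule del_intro[OF or'])
      show "{x1,y1} \<in> E'" unfolding E'_def by (simp add: doubleton_eq_iff)
      let ?C = "restrict_arcs A' {x1,y1}"
      have c: "(u1,x1)\<in>?C" "(x1,v1)\<in>?C" "(y1,w1)\<in>?C" "(y2,y1)\<in>?C" "(w2,y2)\<in>?C" "(u2,x2)\<in>?C" "(x2,v2)\<in>?C" "(x2,y2)\<in>?C"
        using c0 by (simp_all add: restrict_arcs_def doubleton_eq_iff dist)
      show "strong V' ?C"
        apply (rule strong_lift[where B="A" and pa=v1 and pb=v2 and pc=w1 and pd=w1 and qa=u1 and qb=u2 and qc=w2 and qd=w2, OF stA _ V'_def])
        apply (rule arcs_lift[OF _ orA arcs order.refl], assumption)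
        apply (meson c rr)
        apply (meson c rr)
        apply (meson c rr)
        apply (rule oldnew[where z=x1])
           apply (use rsub in blast)
          apply assumption
         apply (rule new)
        apply simp
        by (meson c rr Vm)+
    qed
    have n2: "{y1,w1} \<in> D V' E' A'"
    proof (rule del_intro[OF or'])
      show "{y1,w1} \<in> E'" unfolding E'_def by (simp add: doubleton_eq_iff)
      let ?C = "restrict_arcs A' {y1,w1}"
      have c: "(u1,x1)\<in>?C" "(x1,v1)\<in>?C" "(y2,y1)\<in>?C" "(w2,y2)\<in>?C" "(u2,x2)\<in>?C" "(x2,v2)\<in>?C" "(y1,x1)\<in>?C" "(x2,y2)\<in>?C"
        using c0 by (simp_all add: restrict_arcs_def doubleton_eq_iff dist)
      show "strong V' ?C"
        apply (rule strong_lift[where B="restrict_arcs A {w2,w1}" and pa=v1 and pb=v2 and pc=v1 and pd=v1 and qa=u1 and qb=u2 and qc=w2 and qd=w2, OF stR[OF del(3)] _ V'_def])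
        apply (rule arcs_lift[OF _ orA arcs rsub], assumption)
        apply (meson c rr)
        apply (meson c rr)
        apply (simp add: nR)
        apply (rule oldnew[where z=y1])
           apply (use rsub in blast)
          apply assumption
         apply (rule new)
        apply simp
        by (meson c rr Vm)+
    qed
    have n3: "{y2,w2} \<in> D V' E' A'"
    proof (rule del_intro[OF or'])
      show "{y2,w2} \<in> E'" unfolding E'_def by (simp add: doubleton_eq_iff)
      let ?C = "restrict_arcs A' {y2,w2}"
      have c: "(u1,x1)\<in>?C" "(x1,v1)\<in>?C" "(y1,w1)\<in>?C" "(y2,y1)\<in>?C" "(u2,x2)\<in>?C" "(x2,v2)\<in>?C" "(y1,x1)\<in>?C" "(x2,y2)\<in>?C"
        using c0 by (simp_all add: restrict_arcs_def doubleton_eq_iff dist)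
      show "strong V' ?C"
        apply (rule strong_lift[where B="restrict_arcs A {w2,w1}" and pa=v1 and pb=v2 and pc=w1 and pd=w1 and qa=u1 and qb=u2 and qc=u2 and qd=u2, OF stR[OF del(3)] _ V'_def])
        apply (rule arcs_lift[OF _ orA arcs rsub], assumption)
        apply (meson c rr)
        apply (meson c rr)
        apply (simp add: nR)
        apply (rule oldnew[where z=y2])
           apply (use rsub in blast)
          apply assumption
         apply (rule new)
        apply simp
        by (meson c rr Vm)+
    qed
    have n4: "{x2,y2} \<in> D V' E' A'"
    proof (rule del_intro[OF or'])
      show "{x2,y2} \<in> E'" unfolding E'_def by (simp add: doubleton_eq_iff)
      let ?C = "restrict_arcs A' {x2,y2}"
      have c: "(u1,x1)\<in>?C" "(x1,v1)\<in>?C" "(y1,w1)\<in>?C" "(y2,y1)\<in>?C" "(w2,y2)\<in>?C" "(u2,x2)\<in>?C" "(x2,v2)\<in>?C" "(y1,x1)\<in>?C"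
        using c0 by (simp_all add: restrict_arcs_def doubleton_eq_iff dist)
      show "strong V' ?C"
        apply (rule strong_lift[where B="A" and pa=v1 and pb=v2 and pc=w1 and pd=w1 and qa=u1 and qb=u2 and qc=w2 and qd=w2, OF stA _ V'_def])
        apply (rule arcs_lift[OF _ orA arcs order.refl], assumption)
        apply (meson c rr)
        apply (meson c rr)
        apply (meson c rr)
        apply (rule oldnew[where z=x2])
           apply (use rsub in blast)
          apply assumption
         apply (rule new)
        apply simp
        by (meson c rr Vm)+
    qed
    have n5: "{x2,v2} \<in> D V' E' A'"
    proof (rule del_intro[OF or'])
      show "{x2,v2} \<in> E'" unfolding E'_def by (simp add: doubleton_eq_iff)
      let ?C = "restrict_arcs A' {x2,v2}"
      have c: "(u1,x1)\<in>?C" "(x1,v1)\<in>?C" "(y1,w1)\<in>?C" "(y2,y1)\<in>?C" "(w2,y2)\<in>?C" "(u2,x2)\<in>?C" "(y1,x1)\<in>?C" "(x2,y2)\<in>?C"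
        using c0 by (simp_all add: restrict_arcs_def doubleton_eq_iff dist)
      show "strong V' ?C"
        apply (rule strong_lift[where B="restrict_arcs A {u2,v2}" and pa=v1 and pb=w1 and pc=w1 and pd=w1 and qa=u1 and qb=u2 and qc=w2 and qd=w2, OF stR[OF del(2)] _ V'_def])
        apply (rule arcs_lift[OF _ orA arcs rsub], assumption)
        apply (meson c rr)
        apply (simp add: nR)
        apply (meson c rr)
        apply (rule oldnew[where z=x2])
           apply (use rsub in blast)
          apply assumption
         apply (rule new)
        apply simp
        by (meson c rr Vm)+
    qed
    have old: "g \<in> D V' E' A'" if gD: "g \<in> D V E A - {{u1, v1}, {u2, v2}, {w2, w1}}" for g
    proof (rule del_intro[OF or'])
      have gE: "g\<in>E" using gD by (simp add: D_def)
      obtain p q where pq: "g={p,q}" using gE sg unfolding simple_graph_def by blast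
      hence gV: "g \<subseteq> V" using edgeV gE by auto
      have gD1: "g \<in> D V E A" using gD by (rule DiffD1)
      have gS: "strong V (restrict_arcs A g)" by (rule stR[OF gD1])
      have gES: "g \<in> E - {{u1, v1}, {u2, v2}, {w2, w1}}" using gE gD by (simp add: D_def)
      show "g \<in> E'" unfolding E'_def by (rule UnI1[OF gES])
      let ?C = "restrict_arcs A' g"
      have c: "(u1,x1)\<in>?C" "(x1,v1)\<in>?C" "(y1,w1)\<in>?C" "(y2,y1)\<in>?C" "(w2,y2)\<in>?C" "(u2,x2)\<in>?C" "(x2,v2)\<in>?C" "(y1,x1)\<in>?C" "(x2,y2)\<in>?C"
        by (simp_all add: restrict_arcs_def c0) (use gV new in blast)+
      show "strong V' ?C"
        apply (rule strong_lift[where B="restrict_arcs A g" and pa=v1 and pb=v2 and pc=w1 and pd=w1 and qa=u1 and qb=u2 and qc=w2 and qd=w2, OF gS _ V'_def])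
        apply (rule arcs_lift[OF _ orA arcs rsub], assumption)
        apply (meson c rr)
        apply (meson c rr)
        apply (meson c rr)
        apply (rule oldold; assumption)
        by (meson c rr Vm)+
    qed
    show "(D V E A - {{u1, v1}, {u2, v2}, {w2, w1}}) \<union>
              {{u1, x1}, {x1, y1}, {y1, w1}, {y2, w2}, {x2, y2}, {x2, v2}} \<subseteq> D V' E' A'"
      using old n0 n1 n2 n3 n4 n5 by blast
  qed
  have partB: "(x1, y1) \<in> A' \<and> (y2, x2) \<in> A' \<longrightarrow>
            strong V' A' \<and>
            (D V E A - {{u1, v1}, {u2, v2}, {w2, w1}}) \<union>
              {{x1, v1}, {y1, y2}, {u2, x2}} \<subseteq> D V' E' A'"
  proof (intro impI conjI)
    assume ya: "(x1, y1) \<in> A' \<and> (y2, x2) \<in> A'"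
    note c0 = arcs' ya[THEN conjunct1] ya[THEN conjunct2]
    show "strong V' A'"
      apply (rule strong_lift[where B=A and pa=v1 and pb=v2 and pc=w1 and pd=w1 and qa=u1 and qb=u2 and qc=w2 and qd=w2, OF stA _ V'_def])
      apply (rule arcs_lift[OF _ orA arcs order.refl], assumption)
      by (meson c0 rr oldA Vm)+
    have n0: "{x1,v1} \<in> D V' E' A'"
    proof (rule del_intro[OF or'])
      show "{x1,v1} \<in> E'" unfolding E'_def by (simp add: doubleton_eq_iff)
      let ?C = "restrict_arcs A' {x1,v1}"
      have c: "(u1,x1)\<in>?C" "(y1,w1)\<in>?C" "(y2,y1)\<in>?C" "(w2,y2)\<in>?C" "(u2,x2)\<in>?C" "(x2,v2)\<in>?C" "(x1,y1)\<in>?C" "(y2,x2)\<in>?C"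
        using c0 by (simp_all add: restrict_arcs_def doubleton_eq_iff dist)
      show "strong V' ?C"
        apply (rule strong_lift[where B="restrict_arcs A {u1,v1}" and pa=w1 and pb=v2 and pc=w1 and pd=w1 and qa=u1 and qb=u2 and qc=w2 and qd=w2, OF stR[OF del(1)] _ V'_def])
        apply (rule arcs_lift[OF _ orA arcs rsub], assumption)
        apply (simp add: nR)
        apply (meson c rr)
        apply (meson c rr)
        apply (rule oldnew[where z=x1])
           apply (use rsub in blast)
          apply assumption
         apply (rule new)
        apply simp
        by (meson c rr Vm)+
    qed
    have n1: "{y1,y2} \<in> D V' E' A'"
    proof (rule del_intro[OF or'])
      show "{y1,y2} \<in> E'" unfolding E'_def by (simp add: doubleton_eq_iff)
      let ?C = "restrict_arcs A' {y1,y2}"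
      have c: "(u1,x1)\<in>?C" "(x1,v1)\<in>?C" "(y1,w1)\<in>?C" "(w2,y2)\<in>?C" "(u2,x2)\<in>?C" "(x2,v2)\<in>?C" "(x1,y1)\<in>?C" "(y2,x2)\<in>?C"
        using c0 by (simp_all add: restrict_arcs_def doubleton_eq_iff dist)
      show "strong V' ?C"
        apply (rule strong_lift[where B="restrict_arcs A {w2,w1}" and pa=v1 and pb=v2 and pc=w1 and pd=v2 and qa=u1 and qb=u2 and qc=u1 and qd=w2, OF stR[OF del(3)] _ V'_def])
        apply (rule arcs_lift[OF _ orA arcs rsub], assumption)
        apply (meson c rr)
        apply (meson c rr)
        apply (simp add: nR)
        apply (rule oldnew[where z=y1])
           apply (use rsub in blast)
          apply assumption
         apply (rule new)
        apply simp
        by (meson c rr Vm)+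
    qed
    have n2: "{u2,x2} \<in> D V' E' A'"
    proof (rule del_intro[OF or'])
      show "{u2,x2} \<in> E'" unfolding E'_def by (simp add: doubleton_eq_iff)
      let ?C = "restrict_arcs A' {u2,x2}"
      have c: "(u1,x1)\<in>?C" "(x1,v1)\<in>?C" "(y1,w1)\<in>?C" "(y2,y1)\<in>?C" "(w2,y2)\<in>?C" "(x2,v2)\<in>?C" "(x1,y1)\<in>?C" "(y2,x2)\<in>?C"
        using c0 by (simp_all add: restrict_arcs_def doubleton_eq_iff dist)
      show "strong V' ?C"
        apply (rule strong_lift[where B="restrict_arcs A {u2,v2}" and pa=v1 and pb=v2 and pc=w1 and pd=w1 and qa=u1 and qb=w2 and qc=w2 and qd=w2, OF stR[OF del(2)] _ V'_def])
        apply (rule arcs_lift[OF _ orA arcs rsub], assumption)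
        apply (meson c rr)
        apply (simp add: nR)
        apply (meson c rr)
        apply (rule oldnew[where z=x2])
           apply (use rsub in blast)
          apply assumption
         apply (rule new)
        apply simp
        by (meson c rr Vm)+
    qed
    have old: "g \<in> D V' E' A'" if gD: "g \<in> D V E A - {{u1, v1}, {u2, v2}, {w2, w1}}" for g
    proof (rule del_intro[OF or'])
      have gE: "g\<in>E" using gD by (simp add: D_def)
      obtain p q where pq: "g={p,q}" using gE sg unfolding simple_graph_def by blast
      hence gV: "g \<subseteq> V" using edgeV gE by auto
      have gD1: "g \<in> D V E A" using gD by (rule DiffD1)
      have gS: "strong V (restrict_arcs A g)" by (rule stR[OF gD1])
      have gES: "g \<in> E - {{u1, v1}, {u2, v2}, {w2, w1}}" using gE gD by (simp add: D_def)
      show "g \<in> E'" unfolding E'_def by (rule UnI1[OF gES])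
      let ?C = "restrict_arcs A' g"
      have c: "(u1,x1)\<in>?C" "(x1,v1)\<in>?C" "(y1,w1)\<in>?C" "(y2,y1)\<in>?C" "(w2,y2)\<in>?C" "(u2,x2)\<in>?C" "(x2,v2)\<in>?C" "(x1,y1)\<in>?C" "(y2,x2)\<in>?C"
        by (simp_all add: restrict_arcs_def c0) (use gV new in blast)+
      show "strong V' ?C"
        apply (rule strong_lift[where B="restrict_arcs A g" and pa=v1 and pb=v2 and pc=w1 and pd=w1 and qa=u1 and qb=u2 and qc=w2 and qd=w2, OF gS _ V'_def])
        apply (rule arcs_lift[OF _ orA arcs rsub], assumption)
        apply (meson c rr)
        apply (meson c rr)
        apply (meson c rr)
        apply (rule oldold; assumption)
        by (meson c rr Vm)+
    qed
    show "(D V E A - {{u1, v1}, {u2, v2}, {w2, w1}}) \<union>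
              {{x1, v1}, {y1, y2}, {u2, x2}} \<subseteq> D V' E' A'"
      using old n0 n1 n2 by blast
  qed
  show ?thesis using partA partB by blast
qed
end
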